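(* Let $m$ be a positive integer and let $\mathcal{P}\in\mathbb{R}^{m\times 123}$ be the bar code forward map $\mathcal{P}=\alpha\,\mathcal{G}(\sigma)\,\mathcal{D}$ described in the context, with columns labelled $p^{(j)}_k$ ($j\in[15]$, $k\in K_j$). Let $I_1,\dots,I_{15}\subset[m]$ and $\varepsilon\in\mathbb{R}$ satisfy (i) $\big\| p^{(j)}_k|_{[m]\setminus I_j}\big\|_1<\varepsilon$ for all $j\in[15]$ and all $k\in K_j$; and (ii) $\Big\| \big(\sum_{j'=j+1}^{15} p^{(j')}_{k_{j'}}\big)\big|_{I_j}\Big\|_1<\varepsilon$ for all $j\in[15]$ and all choices $k_{j+1}\in K_{j+1},\dots,k_{15}\in K_{15}$ (the empty sum, for $j=15$, being $0$). Let $x\in\{0,1\}^{123}$ be a bar code vector, let $h\in\mathbb{R}^m$, and let $d=\mathcal{P}x+h$. Suppose that $$\big\| p^{(j)}_{k_1}|_{I_j}-p^{(j)}_{k_2}|_{I_j}\big\|_1>2\big(\|h|_{I_j}\|_1+2\varepsilon\big)$$ for all $j\in[15]$ and all $k_1,k_2\in K_j$ with $k_1\neq k_2$. Then Algorithm 1, run on input $d$, outputs $\hat x=x$ (regardless of how ties in the argmin are broken).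
   Context: Notation: $[m]=\{1,\dots,m\}$. For $v\in\mathbb{R}^m$ and $S\subset[m]$, $v|_S$ denotes the vector of entries of $v$ indexed by $S$, and $\|\cdot\|_1$ is the $\ell_1$ norm. Forward map. Let $n=95$, let $t_1,\dots,t_m\in[0,95]$ be equally spaced points, and let $\sigma>0$, $\alpha>0$. $\mathcal{G}(\sigma)\in\mathbb{R}^{m\times 95}$ has entries $\mathcal{G}_{kj}=\frac{1}{\sqrt{2\pi}\sigma}\int_{j-1}^{j} e^{-(t_k-t)^2/(2\sigma^2)}\,dt$. Let $L,R$ be the $7\times 10$ binary matrices whose $(d+1)$-st column ($d=0,\dots,9$) is respectively the L-pattern and the R-pattern of digit $d$, where the L-patterns for digits $0,\dots,9$ are $0001101,0011001,0010011,0111101,0100011,0110001,0101111,0111011,0110111,0001011$ and each R-pattern is the corresponding L-pattern with $0$s and $1$s interchanged. Let $S=E=(1,0,1)^T$ and $M=(0,1,0,1,0)^T$. $\mathcal{D}\in\{0,1\}^{95\times 123}$ is the block-diagonal matrix $\mathrm{diag}(S,L,L,L,L,L,L,M,R,R,R,R,R,R,E)$. Set $\mathcal{P}=\alpha\mathcal{G}(\sigma)\mathcal{D}$. Column labelling. Let $K_j=\{1\}$ for $j\in\{1,8,15\}$ and $K_j=[10]$ otherwise. $p^{(1)}_1$ is column 1 of $\mathcal{P}$; for $j=2,\dots,7$ and $k\in[10]$, $p^{(j)}_k$ is column $1+10(j-2)+k$; $p^{(8)}_1$ is column 62; for $j=9,\dots,14$ and $k\in[10]$, $p^{(j)}_k$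 is column $62+10(j-9)+k$; $p^{(15)}_1$ is column 123. Bar code vector: $x\in\{0,1\}^{123}$ with $x_1=x_{62}=x_{123}=1$ and such that each of the twelve consecutive blocks of $10$ entries with indices $2\!-\!11,12\!-\!21,\dots,52\!-\!61,63\!-\!72,\dots,113\!-\!122$ contains exactly one entry equal to $1$; equivalently $\mathcal{P}x=\sum_{j=1}^{15}p^{(j)}_{k_j}$ for some $k_j\in K_j$. Algorithm 1 (input $d\in\mathbb{R}^m$): set $\hat x_\ell=1$ for $\ell\in\{1,62,123\}$ and $\hat x_\ell=0$ otherwise; set $\delta\leftarrow d-p^{(1)}_1$. For $j=2,3,\dots,14$ in increasing order: if $j=8$, set $\delta\leftarrow\delta-p^{(8)}_1$; otherwise choose $k_{\min}\in\arg\min_{k\in[10]}\|\delta-p^{(j)}_k\|_1$, set $\hat x_\ell=1$ where $\ell$ is the column index of $p^{(j)}_{k_{\min}}$ (i.e. $\ell=1+10(j-2)+k_{\min}$ if $j\le7$, $\ell=62+10(j-9)+k_{\min}$ if $j\ge9$), and set $\delta\leftarrow\delta-p^{(j)}_{k_{\min}}$. Output $\hat x$. *)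

theory Defs
  imports "HOL-Analysis.Analysis"
begin

text \<open>Vectors in R^m are functions nat => real, indexed by 1..m.\<close>

definition norm1 :: "nat set \<Rightarrow> (nat \<Rightarrow> real) \<Rightarrow> real" where
  "norm1 S v = (\<Sum>i\<in>S. \<bar>v i\<bar>)"

definition gauss_G :: "(nat \<Rightarrow> real) \<Rightarrow> real \<Rightarrow> nat \<Rightarrow> nat \<Rightarrow> real" where
  "gauss_G t \<sigma> k j =
     integral {real j - 1 .. real j} (\<lambda>s. exp (- ((t k - s)^2) / (2 * \<sigma>^2))) / (sqrt (2 * pi) * \<sigma>)"

text \<open>L-patterns of the digits 0..9 (7 bits each); R-patterns are the complements.\<close>
definition Lpat :: "nat \<Rightarrow> real list" where
  "Lpat d = [[0,0,0,1,1,0,1],[0,0,1,1,0,0,1],[0,0,1,0,0,1,1],[0,1,1,1,1,0,1],[0,1,0,0,0,1,1],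
             [0,1,1,0,0,0,1],[0,1,0,1,1,1,1],[0,1,1,1,0,1,1],[0,1,1,0,1,1,1],[0,0,0,1,0,1,1]] ! d"

definition Rpat :: "nat \<Rightarrow> real list" where
  "Rpat d = map (\<lambda>b. 1 - b) (Lpat d)"

text \<open>Column c (1..123) of the block-diagonal matrix D = diag(S,L,...,L,M,R,...,R,E):
  a pair (row offset, nonzero column pattern).\<close>
definition Dcol :: "nat \<Rightarrow> nat \<times> real list" where
  "Dcol c =
    (if c = 1 then (0, [1,0,1])
     else if 2 \<le> c \<and> c \<le> 61 then (3 + 7 * ((c - 2) div 10), Lpat ((c - 2) mod 10))
     else if c = 62 then (45, [0,1,0,1,0])
     else if 63 \<le> c \<and> c \<le> 122 then (50 + 7 * ((c - 63) div 10), Rpat ((c - 63) mod 10))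
     else if c = 123 then (92, [1,0,1])
     else (0, []))"

definition Dmat :: "nat \<Rightarrow> nat \<Rightarrow> real" where
  "Dmat r c = (let (off, pat) = Dcol c in
     if off < r \<and> r \<le> off + length pat then pat ! (r - off - 1) else 0)"

definition Pmat :: "(nat \<Rightarrow> real) \<Rightarrow> real \<Rightarrow> real \<Rightarrow> nat \<Rightarrow> nat \<Rightarrow> real" where
  "Pmat t \<sigma> \<alpha> k c = \<alpha> * (\<Sum>r = 1..95. gauss_G t \<sigma> k r * Dmat r c)"

definition Kset :: "nat \<Rightarrow> nat set" where
  "Kset j = (if j \<in> {1, 8, 15} then {1} else {1..10})"

definition col :: "nat \<Rightarrow> nat \<Rightarrow> nat" where
  "col j k = (if j = 1 then 1
              else if j \<le> 7 then 1 + 10 * (j - 2) + k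
              else if j = 8 then 62
              else if j \<le> 14 then 62 + 10 * (j - 9) + k
              else 123)"

definition pcol :: "(nat \<Rightarrow> nat \<Rightarrow> real) \<Rightarrow> nat \<Rightarrow> nat \<Rightarrow> nat \<Rightarrow> real" where
  "pcol P j k = (\<lambda>r. P r (col j k))"

definition barcode_vec :: "(nat \<Rightarrow> real) \<Rightarrow> bool" where
  "barcode_vec x \<longleftrightarrow>
     (\<forall>c\<in>{1..123}. x c \<in> {0, 1}) \<and> x 1 = 1 \<and> x 62 = 1 \<and> x 123 = 1 \<and>
     (\<forall>i<6. card {c\<in>{2 + 10 * i .. 11 + 10 * i}. x c = 1} = 1) \<and>
     (\<forall>i<6. card {c\<in>{63 + 10 * i .. 72 + 10 * i}. x c = 1} = 1)"

text \<open>Algorithm 1. A run is determined by the sequence ks of chosen indices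
  k_min (ks j for j in 2..14, j /= 8). alg_delta P d ks n is the residual delta
  at the start of iteration j = n + 2.\<close>
primrec alg_delta :: "(nat \<Rightarrow> nat \<Rightarrow> real) \<Rightarrow> (nat \<Rightarrow> real) \<Rightarrow> (nat \<Rightarrow> nat) \<Rightarrow> nat \<Rightarrow> (nat \<Rightarrow> real)" where
  "alg_delta P d ks 0 = (\<lambda>r. d r - pcol P 1 1 r)"
| "alg_delta P d ks (Suc n) =
     (\<lambda>r. alg_delta P d ks n r - pcol P (n + 2) (if n + 2 = 8 then 1 else ks (n + 2)) r)"

text \<open>ks is a valid run of Algorithm 1 on input d (any tie-breaking in the argmin).\<close>
definition alg_run :: "nat \<Rightarrow> (nat \<Rightarrow> nat \<Rightarrow> real) \<Rightarrow> (nat \<Rightarrow> real) \<Rightarrow> (nat \<Rightarrow> nat) \<Rightarrow> bool" where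
  "alg_run m P d ks \<longleftrightarrow>
     (\<forall>j\<in>{2..14} - {8}. ks j \<in> {1..10} \<and>
        (\<forall>k\<in>{1..10}.
           norm1 {1..m} (\<lambda>r. alg_delta P d ks (j - 2) r - pcol P j (ks j) r)
             \<le> norm1 {1..m} (\<lambda>r. alg_delta P d ks (j - 2) r - pcol P j k r)))"

definition alg_out :: "(nat \<Rightarrow> nat) \<Rightarrow> nat \<Rightarrow> real" where
  "alg_out ks c = (if c \<in> {1, 62, 123} \<or> (\<exists>j\<in>{2..14} - {8}. c = col j (ks j)) then 1 else 0)"

end

theory Submission
  imports Defs
begin



definition jof :: "nat \<Rightarrow> nat" where
  "jof c = (if c = 1 then 1 else if c \<le> 61 then (c-2) div 10 + 2 else if c = 62 then 8
            else if c \<le> 122 then (c - 63) div 10 + 9 else 15)"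

lemma col_range:
  assumes "j \<in> {1..15}" "k \<in> Kset j"
  shows "col j k \<in> {1..123} \<and> jof (col j k) = j"
proof -
  consider "j = 1" | "2 \<le> j \<and> j \<le> 7" | "j = 8" | "9 \<le> j \<and> j \<le> 14" | "j = 15"
    using assms(1) by force
  then show ?thesis
  proof cases
    case 2
    then have k: "1 \<le> k" "k \<le> 10" using assms(2) by (auto simp: Kset_def)
    have "col j k = 1 + 10*(j-2) + k" using 2 by (simp add: col_def)
    moreover have "(1 + 10*(j-2) + k - 2) div 10 = j - 2"
    proof -
      have "1 + 10*(j-2) + k - 2 = (k-1) + 10*(j-2)" using k by simp
      then show ?thesis using k by simp
    qed
    ultimately show ?thesis using 2 k by (auto simp: jof_def)
  next
    case 4
    then have k: "1 \<le> k" "k \<le> 10" using assms(2) by (auto simp: Kset_def)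
    have "col j k = 62 + 10*(j-9) + k" using 4 by (simp add: col_def)
    moreover have "(62 + 10*(j-9) + k - 63) div 10 = j - 9"
    proof -
      have "62 + 10*(j-9) + k - 63 = (k-1) + 10*(j-9)" using k by simp
      then show ?thesis using k by simp
    qed
    ultimately show ?thesis using 4 k by (auto simp: jof_def)
  qed (auto simp: col_def jof_def)
qed

lemma step_ineq:
  fixes A I :: "nat set" and q1 q2 T h \<delta> :: "nat \<Rightarrow> real"
  assumes "finite A" "I \<subseteq> A" "\<And>r. \<delta> r = q1 r + T r + h r"
    "norm1 (A - I) q1 < \<epsilon>" "norm1 (A - I) q2 < \<epsilon>" "norm1 I T < \<epsilon>"
    "norm1 I (\<lambda>r. q1 r - q2 r) > 2 * (norm1 I h + 2 * \<epsilon>)"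
  shows "norm1 A (\<lambda>r. \<delta> r - q1 r) < norm1 A (\<lambda>r. \<delta> r - q2 r)"
proof -
  have fI: "finite I" using assms(1,2) finite_subset by blast
  have split: "\<And>f. norm1 A f = norm1 (A - I) f + norm1 I f"
    unfolding norm1_def using sum.subset_diff[OF assms(2,1)] by blast
  have I1: "(\<Sum>r\<in>A-I. \<bar>\<delta> r - q1 r\<bar>) \<le> (\<Sum>r\<in>A-I. \<bar>\<delta> r - q2 r\<bar> + \<bar>q1 r\<bar> + \<bar>q2 r\<bar>)"
    by (rule sum_mono) linarith
  have I2: "(\<Sum>r\<in>I. \<bar>\<delta> r - q1 r\<bar>) \<le> (\<Sum>r\<in>I. \<bar>T r\<bar> + \<bar>h r\<bar>)"
    by (rule sum_mono) (simp add: assms(3))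
  have I3: "(\<Sum>r\<in>I. \<bar>q1 r - q2 r\<bar>) \<le> (\<Sum>r\<in>I. \<bar>\<delta> r - q2 r\<bar> + \<bar>T r\<bar> + \<bar>h r\<bar>)"
    by (rule sum_mono) (unfold assms(3), arith)
  show ?thesis using I1 I2 I3 assms(4-7) split[of "\<lambda>r. \<delta> r - q1 r"] split[of "\<lambda>r. \<delta> r - q2 r"]
    unfolding norm1_def by (simp add: sum.distrib)
qed

lemma block_pick:
  fixes x :: "nat \<Rightarrow> real"
  assumes "card {c\<in>{a+1..a+10}. x c = 1} = 1" and "\<And>k. col j k = a + k"
  shows "\<exists>k\<in>{1..10}. \<forall>k'\<in>{1..10}. x (col j k') = 1 \<longleftrightarrow> k' = k"
proof -
  obtain c0 where S: "{c\<in>{a+1..a+10}. x c = 1} = {c0}" using assms(1) card_1_singletonE by blast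
  then have c0: "c0 \<in> {a+1..a+10}" "x c0 = 1" by auto
  show ?thesis
  proof (rule bexI[of _ "c0 - a"])
    show "c0 - a \<in> {1..10}" using c0 by auto
    show "\<forall>k'\<in>{1..10}. x (col j k') = 1 \<longleftrightarrow> k' = c0 - a"
    proof
      fix k' :: nat assume k': "k' \<in> {1..10}"
      have "x (a + k') = 1 \<longleftrightarrow> a + k' \<in> {c\<in>{a+1..a+10}. x c = 1}" using k' by auto
      also have "\<dots> \<longleftrightarrow> a + k' = c0" using S by auto
      also have "\<dots> \<longleftrightarrow> k' = c0 - a" using c0 by auto
      finally show "x (col j k') = 1 \<longleftrightarrow> k' = c0 - a" using assms(2) by simp
    qed
  qed
qed

lemma barcode_kx:
  assumes "barcode_vec x"
  shows "\<exists>kx. (\<forall>j\<in>{1..15}. kx j \<in> Kset j) \<and>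
     (\<forall>c\<in>{1..123}. x c = (if \<exists>j\<in>{1..15}. c = col j (kx j) then 1 else 0))"
proof -
  note B = assms[unfolded barcode_vec_def]
  have "\<forall>j\<in>{2..14}-{8}. \<exists>k\<in>{1..10}. \<forall>k'\<in>{1..10}. x (col j k') = 1 \<longleftrightarrow> k' = k"
  proof
    fix j :: nat assume j: "j \<in> {2..14}-{8}"
    show "\<exists>k\<in>{1..10}. \<forall>k'\<in>{1..10}. x (col j k') = 1 \<longleftrightarrow> k' = k"
    proof (cases "j \<le> 7")
      case True
      have c: "card {c\<in>{2 + 10 * (j-2) .. 11 + 10 * (j-2)}. x c = 1} = 1" using B True j by auto
      show ?thesis
        by (rule block_pick[where a="1 + 10*(j-2)"]) (use c True j in \<open>auto simp: col_def\<close>)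
    next
      case False
      have c: "card {c\<in>{63 + 10 * (j-9) .. 72 + 10 * (j-9)}. x c = 1} = 1" using B False j by auto
      show ?thesis
        by (rule block_pick[where a="62 + 10*(j-9)"]) (use c False j in \<open>auto simp: col_def\<close>)
    qed
  qed
  then obtain f where f: "\<forall>j\<in>{2..14}-{8}. f j \<in> {1..10} \<and> (\<forall>k'\<in>{1..10}. x (col j k') = 1 \<longleftrightarrow> k' = f j)"
    by metis
  define kx where "kx (j::nat) = (if j \<in> {2..14}-{8} then f j else 1)" for j
  have kxK: "\<forall>j\<in>{1..15}. kx j \<in> Kset j" using f by (auto simp: kx_def Kset_def)
  have char: "x c = 1 \<longleftrightarrow> (\<exists>j\<in>{1..15}. c = col j (kx j))" if c: "c \<in> {1..123}" for c
  proof
    assume xc: "x c = 1"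
    consider "c \<in> {1,62,123}" | "2 \<le> c \<and> c \<le> 61" | "63 \<le> c \<and> c \<le> 122" using c by force
    then show "\<exists>j\<in>{1..15}. c = col j (kx j)"
    proof cases
      case 1 then show ?thesis
        by (auto intro: bexI[of _ 1] bexI[of _ 8] bexI[of _ 15] simp: col_def)
    next
      case 2
      define j where "j = (c-2) div 10 + 2"
      define k where "k = (c-2) mod 10 + 1"
      have j: "j \<in> {2..14}-{8}" "j \<le> 7" using 2 by (auto simp: j_def)
      have k: "k \<in> {1..10}" by (auto simp: k_def)
      have cc: "col j k = c" using j 2 by (simp add: col_def j_def k_def, (arith)?)
      then have "k = kx j" using f j k xc by (auto simp: kx_def)
      then show ?thesis using cc j by (intro bexI[of _ j]) auto
    next
      case 3
      define j where "j = (c-63) div 10 + 9"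
      define k where "k = (c-63) mod 10 + 1"
      have j: "j \<in> {2..14}-{8}" "\<not> j \<le> 7" "j \<noteq> 8" using 3 by (auto simp: j_def)
      have k: "k \<in> {1..10}" by (auto simp: k_def)
      have cc: "col j k = c" using j 3 by (simp add: col_def j_def k_def, (arith)?)
      then have "k = kx j" using f j k xc by (auto simp: kx_def)
      then show ?thesis using cc j by (intro bexI[of _ j]) auto
    qed
  next
    assume "\<exists>j\<in>{1..15}. c = col j (kx j)"
    then obtain j where j: "j \<in> {1..15}" "c = col j (kx j)" by blast
    show "x c = 1"
    proof (cases "j \<in> {2..14}-{8}")
      case True then show ?thesis using f j by (auto simp: kx_def)
    next
      case False
      then have "j = 1 \<or> j = 8 \<or> j = 15" using j by auto
      then show ?thesis using B j by (auto simp: col_def)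
    qed
  qed
  have "\<forall>c\<in>{1..123}. x c = (if \<exists>j\<in>{1..15}. c = col j (kx j) then 1 else 0)"
  proof
    fix c :: nat assume c: "c \<in> {1..123}"
    then have "x c \<in> {0,1}" using B by blast
    then show "x c = (if \<exists>j\<in>{1..15}. c = col j (kx j) then 1 else 0)" using char[OF c] by auto
  qed
  then show ?thesis using kxK by blast
qed

lemma sum_barcode:
  fixes P :: "nat \<Rightarrow> nat \<Rightarrow> real"
  assumes kxK: "\<forall>j\<in>{1..15}. kx j \<in> Kset j"
    and xc: "\<forall>c\<in>{1..123}. x c = (if \<exists>j\<in>{1..15}. c = col j (kx j) then 1 else 0)"
  shows "(\<Sum>c = 1..123. P r c * x c) = (\<Sum>j = 1..15. pcol P j (kx j) r)"
proof -
  let ?C = "{c. \<exists>j\<in>{1..15}. c = col j (kx j)}"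
  have "(\<Sum>c = 1..123. P r c * x c) = (\<Sum>c \<in> {1..123}. if c \<in> ?C then P r c else 0)"
    by (rule sum.cong) (use xc in auto)
  also have "\<dots> = (\<Sum>c \<in> {1..123} \<inter> ?C. P r c)"
    by (simp add: sum.inter_restrict)
  also have "{1..123} \<inter> ?C = (\<lambda>j. col j (kx j)) ` {1..15}"
    using col_range kxK by auto
  also have "(\<Sum>c \<in> (\<lambda>j. col j (kx j)) ` {1..15}. P r c) = (\<Sum>j = 1..15. P r (col j (kx j)))"
  proof (rule sum.reindex[unfolded comp_def])
    show "inj_on (\<lambda>j. col j (kx j)) {1..15}"
    proof (rule inj_onI)
      fix a b assume "a \<in> {1..15::nat}" "b \<in> {1..15::nat}" "col a (kx a) = col b (kx b)"
      then show "a = b" using col_range kxK by metis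
    qed
  qed
  finally show ?thesis by (simp add: pcol_def)
qed

lemma main:
  fixes P :: "nat \<Rightarrow> nat \<Rightarrow> real" and I :: "nat \<Rightarrow> nat set" and x h :: "nat \<Rightarrow> real"
  assumes I_sub: "\<forall>j\<in>{1..15}. I j \<subseteq> {1..m}"
    and cond_i: "\<forall>j\<in>{1..15}. \<forall>k\<in>Kset j.
                   norm1 ({1..m} - I j) (pcol P j k) < \<epsilon>"
    and cond_ii: "\<forall>j\<in>{1..15}. \<forall>kk :: nat \<Rightarrow> nat.
                   (\<forall>j'\<in>{j+1..15}. kk j' \<in> Kset j') \<longrightarrow>
                   norm1 (I j) (\<lambda>r. \<Sum>j'\<in>{j+1..15}. pcol P j' (kk j') r) < \<epsilon>"
    and x_bar: "barcode_vec x"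
    and sep: "\<forall>j\<in>{1..15}. \<forall>k1\<in>Kset j. \<forall>k2\<in>Kset j. k1 \<noteq> k2 \<longrightarrow>
                norm1 (I j) (\<lambda>r. pcol P j k1 r - pcol P j k2 r)
                  > 2 * (norm1 (I j) h + 2 * \<epsilon>)"
    and run: "alg_run m P (\<lambda>r. (\<Sum>c = 1..123. P r c * x c) + h r) ks"
  shows "\<forall>c\<in>{1..123}. alg_out ks c = x c"
proof -
  obtain kx where kxK: "\<forall>j\<in>{1..15}. kx j \<in> Kset j"
    and xc: "\<forall>c\<in>{1..123}. x c = (if \<exists>j\<in>{1..15}. c = col j (kx j) then 1 else 0)"
    using barcode_kx[OF x_bar] by blast
  have "kx 1 \<in> Kset 1" "kx 8 \<in> Kset 8" "kx 15 \<in> Kset 15" using kxK by auto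
  then have kx1: "kx 1 = 1" "kx 8 = 1" "kx 15 = 1" by (auto simp: Kset_def)
  define d where "d = (\<lambda>r. (\<Sum>c = 1..123. P r c * x c) + h r)"
  have d: "d r = (\<Sum>j = 1..15. pcol P j (kx j) r) + h r" for r
    unfolding d_def using sum_barcode[OF kxK xc] by simp
  have delta: "alg_delta P d ks n = (\<lambda>r. (\<Sum>j = n+2..15. pcol P j (kx j) r) + h r)"
    if "n \<le> 13" "\<forall>j\<in>{2..n+1}-{8}. ks j = kx j" for n
    using that
  proof (induction n)
    case 0
    show ?case
    proof
      fix r
      have "(\<Sum>j = 1..15. pcol P j (kx j) r) = pcol P 1 (kx 1) r + (\<Sum>j = 2..15. pcol P j (kx j) r)"
        by (subst sum.atLeast_Suc_atMost) (auto simp: numeral_2_eq_2)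
      then show "alg_delta P d ks 0 r = (\<Sum>j = 0+2..15. pcol P j (kx j) r) + h r"
        using d kx1 by (simp add: numeral_2_eq_2)
    qed
  next
    case (Suc n)
    have IH: "alg_delta P d ks n = (\<lambda>r. (\<Sum>j = n+2..15. pcol P j (kx j) r) + h r)"
      using Suc by auto
    have ch: "(if n + 2 = 8 then 1 else ks (n + 2)) = kx (n+2)"
      using Suc.prems kx1 by auto
    show ?case
    proof
      fix r
      have "(\<Sum>j = n+2..15. pcol P j (kx j) r) = pcol P (n+2) (kx (n+2)) r + (\<Sum>j = Suc (n+2)..15. pcol P j (kx j) r)"
        using Suc.prems by (subst sum.atLeast_Suc_atMost) auto
      then show "alg_delta P d ks (Suc n) r = (\<Sum>j = Suc n+2..15. pcol P j (kx j) r) + h r"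
        using IH ch by simp
    qed
  qed
  have ks_eq: "\<forall>j\<in>{2..n+1}-{8}. ks j = kx j" if "n \<le> 13" for n
    using that
  proof (induction n)
    case 0 then show ?case by auto
  next
    case (Suc n)
    have IH: "\<forall>j\<in>{2..n+1}-{8}. ks j = kx j" using Suc by auto
    have dl: "alg_delta P d ks n = (\<lambda>r. (\<Sum>j = n+2..15. pcol P j (kx j) r) + h r)"
      using delta IH Suc.prems by auto
    show ?case
    proof (cases "n + 2 = 8")
      case True then show ?thesis using IH by (auto simp: le_Suc_eq)
    next
      case False
      define j where "j = n + 2"
      have j: "j \<in> {2..14}-{8}" "j \<in> {1..15}" using False Suc.prems by (auto simp: j_def)
      have Kj: "Kset j = {1..10}" using j by (auto simp: Kset_def)
      have rj: "ks j \<in> {1..10}" and mn: "norm1 {1..m} (\<lambda>r. alg_delta P d ks n r - pcol P j (ks j) r)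
             \<le> norm1 {1..m} (\<lambda>r. alg_delta P d ks n r - pcol P j (kx j) r)"
      proof -
        have R: "ks j \<in> {1..10} \<and> (\<forall>k\<in>{1..10}.
           norm1 {1..m} (\<lambda>r. alg_delta P d ks (j - 2) r - pcol P j (ks j) r)
             \<le> norm1 {1..m} (\<lambda>r. alg_delta P d ks (j - 2) r - pcol P j k r))"
          using run j(1) unfolding alg_run_def d_def[symmetric] by blast
        have "kx j \<in> {1..10}" using kxK j Kj by auto
        moreover have "j - 2 = n" by (simp add: j_def)
        ultimately show "ks j \<in> {1..10}" "norm1 {1..m} (\<lambda>r. alg_delta P d ks n r - pcol P j (ks j) r)
             \<le> norm1 {1..m} (\<lambda>r. alg_delta P d ks n r - pcol P j (kx j) r)" using R by auto
      qed
      have "ks j = kx j"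
      proof (rule ccontr)
        assume ne: "ks j \<noteq> kx j"
        have kxj: "kx j \<in> Kset j" using kxK j by auto
        have ksj: "ks j \<in> Kset j" using rj Kj by auto
        have "norm1 {1..m} (\<lambda>r. alg_delta P d ks n r - pcol P j (kx j) r)
             < norm1 {1..m} (\<lambda>r. alg_delta P d ks n r - pcol P j (ks j) r)"
        proof (rule step_ineq[where I="I j" and \<epsilon>=\<epsilon> and h=h
                 and T="\<lambda>r. \<Sum>j'\<in>{j+1..15}. pcol P j' (kx j') r"])
          show "finite {1..m}" by simp
          show "I j \<subseteq> {1..m}" using I_sub j by auto
          show "alg_delta P d ks n r = pcol P j (kx j) r + (\<Sum>j'\<in>{j+1..15}. pcol P j' (kx j') r) + h r" for r
          proof -
            have "(\<Sum>j'=j..15. pcol P j' (kx j') r) = pcol P j (kx j) r + (\<Sum>j'=Suc j..15. pcol P j' (kx j') r)"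
              by (rule sum.atLeast_Suc_atMost) (use j in auto)
            moreover have "alg_delta P d ks n r = (\<Sum>j'=j..15. pcol P j' (kx j') r) + h r"
              using dl unfolding j_def by simp
            ultimately show ?thesis by simp
          qed
          show "norm1 ({1..m} - I j) (pcol P j (kx j)) < \<epsilon>" by (rule cond_i[rule_format, OF j(2) kxj])
          show "norm1 ({1..m} - I j) (pcol P j (ks j)) < \<epsilon>" by (rule cond_i[rule_format, OF j(2) ksj])
          show "norm1 (I j) (\<lambda>r. \<Sum>j'\<in>{j+1..15}. pcol P j' (kx j') r) < \<epsilon>"
          proof -
            have "\<forall>j'\<in>{j+1..15}. kx j' \<in> Kset j'" using kxK by auto
            then show ?thesis by (rule mp[OF spec[OF bspec[OF cond_ii j(2)], of kx]])
          qed
          show "2 * (norm1 (I j) h + 2 * \<epsilon>) < norm1 (I j) (\<lambda>r. pcol P j (kx j) r - pcol P j (ks j) r)"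
            using sep[rule_format, OF j(2) kxj ksj] ne by metis
        qed
        then show False using mn by simp
      qed
      then show ?thesis using IH by (auto simp: le_Suc_eq j_def)
    qed
  qed
  have ks: "\<forall>j\<in>{2..14}-{8}. ks j = kx j" using ks_eq[of 13] by simp
  show ?thesis
  proof
    fix c :: nat assume c: "c \<in> {1..123}"
    have "(c \<in> {1, 62, 123} \<or> (\<exists>j\<in>{2..14} - {8}. c = col j (ks j))) \<longleftrightarrow>
          (\<exists>j\<in>{1..15}. c = col j (kx j))"
    proof
      assume "c \<in> {1, 62, 123} \<or> (\<exists>j\<in>{2..14} - {8}. c = col j (ks j))"
      then show "\<exists>j\<in>{1..15}. c = col j (kx j)"
      proof
        assume "c \<in> {1, 62, 123}"
        then show ?thesis by (auto intro: bexI[of _ 1] bexI[of _ 8] bexI[of _ 15] simp: col_def)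
      next
        assume "\<exists>j\<in>{2..14} - {8}. c = col j (ks j)"
        then show ?thesis using ks by force
      qed
    next
      assume "\<exists>j\<in>{1..15}. c = col j (kx j)"
      then obtain j where j: "j \<in> {1..15}" "c = col j (kx j)" by blast
      show "c \<in> {1, 62, 123} \<or> (\<exists>j\<in>{2..14} - {8}. c = col j (ks j))"
      proof (cases "j \<in> {2..14}-{8}")
        case True then show ?thesis using ks j by auto
      next
        case False
        then have "j = 1 \<or> j = 8 \<or> j = 15" using j by auto
        then show ?thesis using j by (auto simp: col_def)
      qed
    qed
    then show "alg_out ks c = x c" using xc c by (simp add: alg_out_def)
  qed
qed

theorem theorem1:
  fixes m :: nat and t :: "nat \<Rightarrow> real" and \<sigma> \<alpha> \<epsilon> :: real
    and I :: "nat \<Rightarrow> nat set" and x h :: "nat \<Rightarrow> real"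
  assumes m_pos: "m > 0"
    and sigma_pos: "\<sigma> > 0" and alpha_pos: "\<alpha> > 0"
    and t_range: "\<forall>k\<in>{1..m}. t k \<in> {0..95}"
    and t_equi: "\<forall>k\<in>{1..<m}. t (k + 1) - t k = t 2 - t 1"
    and I_sub: "\<forall>j\<in>{1..15}. I j \<subseteq> {1..m}"
    and cond_i: "\<forall>j\<in>{1..15}. \<forall>k\<in>Kset j.
                   norm1 ({1..m} - I j) (pcol (Pmat t \<sigma> \<alpha>) j k) < \<epsilon>"
    and cond_ii: "\<forall>j\<in>{1..15}. \<forall>kk :: nat \<Rightarrow> nat.
                   (\<forall>j'\<in>{j+1..15}. kk j' \<in> Kset j') \<longrightarrow>
                   norm1 (I j) (\<lambda>r. \<Sum>j'\<in>{j+1..15}. pcol (Pmat t \<sigma> \<alpha>) j' (kk j') r) < \<epsilon>"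
    and x_bar: "barcode_vec x"
    and sep: "\<forall>j\<in>{1..15}. \<forall>k1\<in>Kset j. \<forall>k2\<in>Kset j. k1 \<noteq> k2 \<longrightarrow>
                norm1 (I j) (\<lambda>r. pcol (Pmat t \<sigma> \<alpha>) j k1 r - pcol (Pmat t \<sigma> \<alpha>) j k2 r)
                  > 2 * (norm1 (I j) h + 2 * \<epsilon>)"
  shows "\<forall>ks. alg_run m (Pmat t \<sigma> \<alpha>)
                (\<lambda>r. (\<Sum>c = 1..123. Pmat t \<sigma> \<alpha> r c * x c) + h r) ks
             \<longrightarrow> (\<forall>c\<in>{1..123}. alg_out ks c = x c)"
  proof (intro allI impI)
  fix ks assume run: "alg_run m (Pmat t \<sigma> \<alpha>) (\<lambda>r. (\<Sum>c = 1..123. Pmat t \<sigma> \<alpha> r c * x c) + h r) ks"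
  show "\<forall>c\<in>{1..123}. alg_out ks c = x c"
    by (rule main[OF I_sub cond_i cond_ii x_bar sep run])
qed

end
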